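(* Suppose Assumption 1 (see context) holds. Let $C_*=\max_{1\le t\le n}\|\boldsymbol\Sigma_t\|<\infty$, $\iota_2=\iota_1/C_*$ and $\iota_3=\iota_1(1-\rho)/(C_1^2C_* )$. Then for every $u\in\mathbb R^d$ with $\|u\|=1$, \[ \max_{1\le t\le n}\mathsf E\bigl[\exp\{\iota_2(u^\intercal e_t)^2\}\bigr]\le C_0, \qquad \max_{1\le t\le n}\max_{1\le i\le d}\mathsf E\bigl[\exp\{\iota_3x_{t,i}^2\}\bigr]\le C_0^{1/(1-\rho)}<\infty. \]
   Context: The $d$-dimensional series $X_t=(x_{t,1},\dots,x_{t,d})^\intercal$ satisfies $X_t=\mathbf A(\tau_t)X_{t-1}+e_t$, $e_t=\boldsymbol\Sigma_t^{1/2}\varepsilon_t$, $\boldsymbol\Sigma_t=\boldsymbol\Sigma(\tau_t)$, $\tau_t=t/n$, with deterministic matrix functions $\mathbf A(\cdot)$, $\boldsymbol\Sigma(\cdot)$ on $[0,1]$, $\boldsymbol\Omega=\boldsymbol\Sigma^{-1}$, and $(\varepsilon_t)$ i.i.d. with mean zero and identity covariance. Assumption 1: (i) uniformly in $\tau\in[0,1]$, $\det(\mathbf I_d-\mathbf A(\tau)z)\ne0$ for all $z\in\mathbb C$ with $|z|\le1$, and entries of $\mathbf A(\cdot)$ are twice continuously differentiable; (ii) $\boldsymbol\Omega(\tau)$ is positive definite uniformly, $\sup_\tau\|\boldsymbol\Sigma(\tau)\|<\infty$ (operator norm), entries of $\boldsymbol\Sigma,\boldsymbol\Omega$ twice continuously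 differentiable; (iii) there are constants $\iota_1,C_0>0$ with $\mathsf E[\exp\{\iota_1(u^\intercal\varepsilon_t)^2\}]\le C_0$ for every unit $u\in\mathbb R^d$. Standing assumption: $X_t=\sum_{k\ge0}\boldsymbol\Phi_{t,k}e_{t-k}$ with $\max_{0\le t\le n}\|\boldsymbol\Phi_{t,k}\|\le C_1\rho^k$ for all sufficiently large $k$, where $C_1>0$ and $0<\rho<1$ are constants. *)

theory Defs
  imports "HOL-Probability.Probability"
begin

definition psd_mat :: "real^'d^'d \<Rightarrow> bool" where
  "psd_mat S \<longleftrightarrow> transpose S = S \<and> (\<forall>x. 0 \<le> x \<bullet> (S *v x))"

definition matrix_sqrt :: "real^'d^'d \<Rightarrow> real^'d^'d" where
  "matrix_sqrt S = (THE R. psd_mat R \<and> R ** R = S)"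

definition pd_mat :: "real^'d^'d \<Rightarrow> bool" where
  "pd_mat S \<longleftrightarrow> transpose S = S \<and> (\<forall>x. x \<noteq> 0 \<longrightarrow> 0 < x \<bullet> (S *v x))"

definition opnorm :: "real^'d^'m \<Rightarrow> real" where
  "opnorm M = onorm (\<lambda>x. M *v x)"

definition C2_on01 :: "(real \<Rightarrow> real) \<Rightarrow> bool" where
  "C2_on01 f \<longleftrightarrow> (\<exists>f' f''.
     (\<forall>x\<in>{0..1}. (f has_real_derivative f' x) (at x within {0..1})
                \<and> (f' has_real_derivative f'' x) (at x within {0..1}))
     \<and> continuous_on {0..1} f'')"

text \<open>Rescaled time of an integer time index t; pre-sample times t \<le> 0 are
  assigned the rescaled time of t = 1.\<close>
definition tau :: "nat \<Rightarrow> int \<Rightarrow> real" where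
  "tau n t = real_of_int (max t 1) / real n"

end

theory Submission
  imports Defs
begin


lemma sym_inner:
  fixes S :: "real^'d^'d"
  assumes "transpose S = S"
  shows "(S *v a) \<bullet> b = a \<bullet> (S *v b)"
proof -
  have "(S *v a) \<bullet> b = (a v* transpose S) \<bullet> b" by simp
  also have "\<dots> = a \<bullet> (transpose S *v b)" by (rule dot_lmul_matrix)
  finally show ?thesis using assms by simp
qed

lemma quad_zero:
  fixes a b :: real
  assumes "\<forall>t. 0 \<le> 2*t*b + t^2*a" "a \<ge> 0"
  shows "b = 0"
proof (rule ccontr)
  assume "b \<noteq> 0"
  define t where "t = -b/(a+1)"
  have "0 \<le> 2*t*b + t^2*a" using assms(1) by blast
  hence "0 \<le> (a+1)^2 * (2*t*b + t^2*a)" by simp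
  have ta: "t*(a+1) = -b" using assms(2) unfolding t_def by simp
  have "(a+1)^2 * (2*t*b + t^2*a) = 2*(t*(a+1))*b*(a+1) + (t*(a+1))^2*a"
    by (simp add: algebra_simps power2_eq_square)
  also have "\<dots> = -(b^2)*(a+2)" unfolding ta by (simp add: algebra_simps power2_eq_square)
  finally have eq: "(a+1)^2 * (2*t*b + t^2*a) = -(b^2)*(a+2)" .
  note \<open>0 \<le> (a+1)^2 * (2*t*b + t^2*a)\<close>
  also note eq
  finally have "b^2*(a+2) \<le> 0" by simp
  moreover have "b^2*(a+2) > 0" using \<open>b \<noteq> 0\<close> assms(2) by simp
  ultimately show False by simp
qed

lemma norm_add_scale_sq:
  fixes p q :: "'a::real_inner"
  shows "(norm (p + t *\<^sub>R q))^2 = (norm p)^2 + 2*t*(p \<bullet> q) + t^2*(norm q)^2"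
  unfolding power2_norm_eq_inner by (simp add: inner_add_left inner_add_right inner_commute algebra_simps power2_eq_square)

lemma eigvec_exists:
  fixes S :: "real^'d^'d"
  assumes sym: "transpose S = S" and V: "subspace V" and inv: "\<forall>x\<in>V. S *v x \<in> V"
    and ne: "V \<noteq> {0}"
  shows "\<exists>x\<in>V. norm x = 1 \<and> (\<exists>l. S *v x = l *\<^sub>R x)"
proof -
  define K where "K = V \<inter> sphere 0 1"
  have "compact K" unfolding K_def
    by (intro closed_Int_compact closed_subspace V compact_sphere)
  obtain y where y: "y \<in> V" "y \<noteq> 0" using ne V subspace_0 by blast
  have "y /\<^sub>R norm y \<in> K" unfolding K_def using y V by (auto simp: subspace_scale)
  hence "K \<noteq> {}" by blast
  have "continuous_on K (\<lambda>x. norm (S *v x))"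
    by (intro continuous_intros linear_continuous_on bounded_linear_compose[OF matrix_vector_mul_bounded_linear]) (auto intro: bounded_linear_ident)
  from continuous_attains_sup[OF \<open>compact K\<close> \<open>K \<noteq> {}\<close> this]
  obtain x where x: "x \<in> K" and xmax: "\<forall>z\<in>K. norm (S *v z) \<le> norm (S *v x)" by blast
  define mu where "mu = (norm (S *v x))^2"
  have xV: "x \<in> V" and nx: "norm x = 1" using x by (auto simp: K_def)
  have bnd: "(norm (S *v z))^2 \<le> mu * (norm z)^2" if "z \<in> V" for z
  proof (cases "z = 0")
    case True then show ?thesis by (simp add: mu_def)
  next
    case False
    have "z /\<^sub>R norm z \<in> K" unfolding K_def using that False V by (auto simp: subspace_scale)
    hence "norm (S *v (z /\<^sub>R norm z)) \<le> norm (S *v x)" using xmax by blast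
    hence "norm (S *v z) / norm z \<le> norm (S *v x)"
      by (simp add: matrix_vector_mult_scaleR divide_inverse mult.commute)
    hence "norm (S *v z) \<le> norm (S *v x) * norm z" using False by (simp add: divide_le_eq)
    hence "(norm (S *v z))^2 \<le> (norm (S *v x) * norm z)^2" by (intro power_mono) auto
    thus ?thesis by (simp add: mu_def power_mult_distrib)
  qed
  define w where "w = mu *\<^sub>R x - S *v (S *v x)"
  have wV: "w \<in> V" unfolding w_def using inv xV V by (auto simp: subspace_diff subspace_scale)
  have orth: "w \<bullet> z = 0" if zV: "z \<in> V" for z
  proof -
    define a where "a = mu * (norm z)^2 - (norm (S *v z))^2"
    define b where "b = mu * (x \<bullet> z) - (S *v x) \<bullet> (S *v z)"
    have "a \<ge> 0" using bnd[OF zV] by (simp add: a_def)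
    moreover have "\<forall>t. 0 \<le> 2*t*b + t^2*a"
    proof
      fix t :: real
      have "x + t *\<^sub>R z \<in> V" using xV zV V by (auto simp: subspace_add subspace_scale)
      from bnd[OF this] have "0 \<le> mu * (norm (x + t *\<^sub>R z))^2 - (norm (S *v (x + t *\<^sub>R z)))^2" by simp
      also have "\<dots> = 2*t*b + t^2*a"
        unfolding a_def b_def mu_def
        using nx by (simp add: matrix_vector_right_distrib matrix_vector_mult_scaleR norm_add_scale_sq
           algebra_simps)
      finally show "0 \<le> 2*t*b + t^2*a" .
    qed
    ultimately have "b = 0" using quad_zero by blast
    moreover have "(S *v x) \<bullet> (S *v z) = (S *v (S *v x)) \<bullet> z" by (simp add: sym_inner[OF sym])
    ultimately show ?thesis unfolding w_def b_def
      by (simp add: inner_diff_left)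
  qed
  have "w = 0" using orth[OF wV] by simp
  hence SS: "S *v (S *v x) = mu *\<^sub>R x" by (simp add: w_def)
  show ?thesis
  proof (cases "S *v x = sqrt mu *\<^sub>R x")
    case True then show ?thesis using xV nx by blast
  next
    case False
    define v where "v = S *v x - sqrt mu *\<^sub>R x"
    have "v \<noteq> 0" using False by (simp add: v_def)
    have vV: "v \<in> V" unfolding v_def using inv xV V by (auto simp: subspace_diff subspace_scale)
    have mu0: "mu \<ge> 0" by (simp add: mu_def)
    have "S *v v = (- sqrt mu) *\<^sub>R v"
      unfolding v_def using SS mu0 by (simp add: matrix_vector_mult_diff_distrib matrix_vector_mult_scaleR algebra_simps)
    hence "S *v (v /\<^sub>R norm v) = (- sqrt mu) *\<^sub>R (v /\<^sub>R norm v)"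
      by (simp add: matrix_vector_mult_scaleR)
    moreover have "v /\<^sub>R norm v \<in> V" using vV V by (simp add: subspace_scale)
    moreover have "norm (v /\<^sub>R norm v) = 1" using \<open>v \<noteq> 0\<close> by simp
    ultimately show ?thesis by blast
  qed
qed

lemma spectral_subspace:
  fixes S :: "real^'d^'d"
  assumes sym: "transpose S = S"
  shows "subspace V \<Longrightarrow> (\<forall>x\<in>V. S *v x \<in> V) \<Longrightarrow>
    \<exists>B. finite B \<and> B \<subseteq> V \<and> pairwise orthogonal B \<and> (\<forall>v\<in>B. norm v = 1 \<and> (\<exists>l. S *v v = l *\<^sub>R v)) \<and> V \<subseteq> span B"
proof (induction "dim V" arbitrary: V rule: less_induct)
  case (less V)
  show ?case
  proof (cases "V = {0}")
    case True
    then show ?thesis by (intro exI[of _ "{}"]) auto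
  next
    case False
    from eigvec_exists[OF sym less.prems False]
    obtain x l where xV: "x \<in> V" and nx: "norm x = 1" and ev: "S *v x = l *\<^sub>R x" by blast
    define V' where "V' = {y \<in> V. x \<bullet> y = 0}"
    have sub': "subspace V'" using less.prems(1) unfolding V'_def subspace_def
      by (auto simp: inner_add_right)
    have inv': "\<forall>y\<in>V'. S *v y \<in> V'"
    proof
      fix y assume "y \<in> V'"
      hence "y \<in> V" "x \<bullet> y = 0" by (auto simp: V'_def)
      moreover have "x \<bullet> (S *v y) = (S *v x) \<bullet> y" by (simp add: sym_inner[OF sym])
      ultimately show "S *v y \<in> V'" using less.prems(2) ev by (auto simp: V'_def)
    qed
    have "x \<notin> V'" using nx by (auto simp: V'_def simp flip: power2_norm_eq_inner)
    hence "V' \<subset> V" using xV unfolding V'_def by blast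
    hence "span V' \<subset> span V" using sub' less.prems(1) by (simp add: span_eq_iff[THEN iffD2])
    hence "dim V' < dim V" by (rule dim_psubset)
    from less.hyps[OF this sub' inv'] obtain B' where B': "finite B'" "B' \<subseteq> V'" "pairwise orthogonal B'"
      "\<forall>v\<in>B'. norm v = 1 \<and> (\<exists>l. S *v v = l *\<^sub>R v)" "V' \<subseteq> span B'" by blast
    have xB': "x \<notin> B'" using \<open>x \<notin> V'\<close> B'(2) by blast
    have "pairwise orthogonal (insert x B')"
      using B'(2,3) unfolding pairwise_def orthogonal_def
      by (auto simp: V'_def inner_commute)
    moreover have "V \<subseteq> span (insert x B')"
    proof
      fix y assume yV: "y \<in> V"
      define y' where "y' = y - (x \<bullet> y) *\<^sub>R x"
      have "y' \<in> V'" unfolding V'_def y'_def using yV xV less.prems(1) nx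
        by (auto simp: subspace_diff subspace_scale inner_diff_right simp flip: power2_norm_eq_inner)
      hence "y' \<in> span (insert x B')" using B'(5) span_mono[of B' "insert x B'"] by blast
      moreover have "x \<in> span (insert x B')" by (simp add: span_base)
      ultimately have "y' + (x \<bullet> y) *\<^sub>R x \<in> span (insert x B')"
        by (intro span_add span_scale) auto
      thus "y \<in> span (insert x B')" by (simp add: y'_def)
    qed
    ultimately show ?thesis using B' xV nx ev
      by (intro exI[of _ "insert x B'"]) (auto simp: V'_def)
  qed
qed



lemma mv_sum: "(A::real^'n^'m) *v (\<Sum>i\<in>I. g i) = (\<Sum>i\<in>I. A *v g i)"
  by (induct I rule: infinite_finite_induct) (auto simp: matrix_vector_right_distrib)

lemma coef_extract:
  fixes B :: "(real^'d) set"
  assumes "finite B" "pairwise orthogonal B" "\<forall>v\<in>B. norm v = 1" "v \<in> B"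
  shows "v \<bullet> (\<Sum>w\<in>B. c w *\<^sub>R w) = c v"
proof -
  have "v \<bullet> (\<Sum>w\<in>B. c w *\<^sub>R w) = (\<Sum>w\<in>B. c w * (v \<bullet> w))"
    by (simp add: inner_sum_right)
  also have "\<dots> = (\<Sum>w\<in>B. if w = v then c w else 0)"
  proof (rule sum.cong)
    fix w assume "w \<in> B"
    show "c w * (v \<bullet> w) = (if w = v then c w else 0)"
    proof (cases "w = v")
      case True
      then show ?thesis using assms(3,4) by (simp flip: power2_norm_eq_inner)
    next
      case False
      then show ?thesis using assms(2,4) \<open>w \<in> B\<close> by (auto simp: pairwise_def orthogonal_def)
    qed
  qed simp
  also have "\<dots> = c v" using assms(1,4) by simp
  finally show ?thesis .
qed

lemma orth_expand:
  fixes B :: "(real^'d) set"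
  assumes "finite B" "pairwise orthogonal B" "\<forall>v\<in>B. norm v = 1" "y \<in> span B"
  shows "y = (\<Sum>v\<in>B. (v \<bullet> y) *\<^sub>R v)"
proof -
  obtain u where u: "y = (\<Sum>v\<in>B. u v *\<^sub>R v)" using assms(4) span_finite[OF assms(1)] by auto
  have "(\<Sum>v\<in>B. (v \<bullet> y) *\<^sub>R v) = (\<Sum>v\<in>B. u v *\<^sub>R v)"
    by (rule sum.cong) (auto simp: u coef_extract[OF assms(1-3)])
  thus ?thesis using u by simp
qed

lemma sym_from_inner:
  fixes A :: "real^'d^'d"
  assumes "\<And>x y. (A *v x) \<bullet> y = x \<bullet> (A *v y)"
  shows "transpose A = A"
proof -
  have c1: "(A *v axis j 1) $ i = A $ i $ j" for i j
    by (simp add: matrix_vector_mult_def axis_def if_distrib cong: if_cong)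
  have comp: "(A *v axis j 1) \<bullet> axis i 1 = A $ i $ j" for i j
    using c1[of j i] by (simp add: inner_axis)
  show ?thesis
    unfolding vec_eq_iff transpose_def
    using comp assms by (metis inner_commute vec_lambda_beta)
qed


lemma psd_sqrt_unique_exists:
  fixes S :: "real^'d^'d"
  assumes sym: "transpose S = S" and psd: "\<forall>x. 0 \<le> x \<bullet> (S *v x)"
  shows "\<exists>!R. psd_mat R \<and> R ** R = S"
proof -
  obtain B where fB: "finite B" and oB: "pairwise orthogonal B"
    and eB: "\<forall>v\<in>B. norm v = 1 \<and> (\<exists>l. S *v v = l *\<^sub>R v)" and sB: "UNIV \<subseteq> span B"
    using spectral_subspace[OF sym subspace_UNIV, OF ballI[OF UNIV_I]] by blast
  have nB: "\<forall>v\<in>B. norm v = 1" using eB by blast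
  define l where "l v = v \<bullet> (S *v v)" for v
  have Sv: "S *v v = l v *\<^sub>R v" if "v \<in> B" for v
  proof -
    from eB that obtain c where c: "S *v v = c *\<^sub>R v" by auto
    have vv: "v \<bullet> v = 1" using nB that by (metis power2_norm_eq_inner power_one)
    have "l v = c" unfolding l_def c by (simp add: vv)
    thus ?thesis using c by simp
  qed
  have l0: "l v \<ge> 0" for v using psd by (simp add: l_def)
  have exp: "y = (\<Sum>v\<in>B. (v \<bullet> y) *\<^sub>R v)" for y
    using sB by (intro orth_expand[OF fB oB nB]) auto
  define f where "f y = (\<Sum>v\<in>B. (sqrt (l v) * (v \<bullet> y)) *\<^sub>R v)" for y
  have lin: "linear f" unfolding f_def
    by (intro linearI) (simp_all only: inner_add_right distrib_left scaleR_add_left sum.distrib inner_scaleR_right scaleR_sum_right scaleR_scaleR mult.left_commute)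
  define R where "R = matrix f"
  have Rf: "R *v y = f y" for y
    unfolding R_def by (rule matrix_works[OF linear_matrix_vector_mul_eq[THEN iffD2, OF lin]])
  have cf: "v \<bullet> f y = sqrt (l v) * (v \<bullet> y)" if "v \<in> B" for v y
    unfolding f_def by (rule coef_extract[OF fB oB nB that, of "\<lambda>v. sqrt (l v) * (v \<bullet> y)"])
  have Rsym: "transpose R = R"
  proof (rule sym_from_inner)
    fix x y
    have 1: "(R *v x) \<bullet> y = (\<Sum>v\<in>B. sqrt (l v) * (v \<bullet> x) * (v \<bullet> y))"
      by (simp add: Rf f_def inner_sum_left)
    have 2: "x \<bullet> (R *v y) = (\<Sum>v\<in>B. sqrt (l v) * (v \<bullet> y) * (x \<bullet> v))"
      by (simp add: Rf f_def inner_sum_right)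
    have 3: "sqrt (l v) * (v \<bullet> x) * (v \<bullet> y) = sqrt (l v) * (v \<bullet> y) * (x \<bullet> v)" for v
      by (simp add: inner_commute[of v x] mult_ac)
    show "(R *v x) \<bullet> y = x \<bullet> (R *v y)" unfolding 1 2 by (rule sum.cong[OF refl 3])
  qed
  have Rpsd: "psd_mat R"
    unfolding psd_mat_def
  proof (intro conjI Rsym allI)
    fix x
    have "x \<bullet> (R *v x) = (\<Sum>v\<in>B. sqrt (l v) * (v \<bullet> x) * (x \<bullet> v))"
      by (simp add: Rf f_def inner_sum_right)
    also have "\<dots> = (\<Sum>v\<in>B. sqrt (l v) * (v \<bullet> x) * (v \<bullet> x))"
      by (simp add: inner_commute[of x])
    also have "\<dots> \<ge> 0" using l0 by (intro sum_nonneg) (simp add: mult.assoc)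
    finally show "0 \<le> x \<bullet> (R *v x)" .
  qed
  have RR: "R ** R = S"
  proof (subst matrix_eq, intro allI)
    fix y
    have "(R ** R) *v y = f (f y)" by (simp add: Rf flip: matrix_vector_mul_assoc)
    also have "\<dots> = (\<Sum>v\<in>B. (l v * (v \<bullet> y)) *\<^sub>R v)"
      unfolding f_def[of "f y"] using l0
      by (intro sum.cong refl) (simp add: cf mult.assoc[symmetric] real_sqrt_mult[symmetric])
    also have "\<dots> = S *v y"
      by (subst (2) exp[of y]) (simp add: mv_sum matrix_vector_mult_scaleR Sv mult.commute)
    finally show "(R ** R) *v y = S *v y" .
  qed
  have uniq: "T = R" if T: "psd_mat T" "T ** T = S" for T
  proof -
    have Tsym: "transpose T = T" and Tpsd: "\<forall>x. 0 \<le> x \<bullet> (T *v x)" using T(1) by (auto simp: psd_mat_def)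
    have Tv: "T *v v = sqrt (l v) *\<^sub>R v" if vB: "v \<in> B" for v
    proof -
      define s where "s = sqrt (l v)"
      have s2: "s * s = l v" using l0 by (simp add: s_def)
      have s0: "s \<ge> 0" using l0[of v] by (simp add: s_def)
      have TT: "T *v (T *v v) = l v *\<^sub>R v" using Sv[OF vB] T(2) by (simp add: matrix_vector_mul_assoc)
      define w where "w = T *v v - s *\<^sub>R v"
      have Tw: "T *v w = - s *\<^sub>R w"
        unfolding w_def using TT s2
        by (simp add: matrix_vector_mult_diff_distrib matrix_vector_mult_scaleR algebra_simps)
      have "0 \<le> w \<bullet> (T *v w)" using Tpsd by blast
      hence "s * (w \<bullet> w) \<le> 0" by (simp add: Tw)
      moreover have "w \<bullet> w \<ge> 0" by simp
      ultimately have "s = 0 \<or> w \<bullet> w = 0" using s0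
        by (metis antisym mult_nonneg_nonneg mult_eq_0_iff)
      thus ?thesis
      proof
        assume "s = 0"
        hence "l v = 0" using s2 by simp
        have "(T *v v) \<bullet> (T *v v) = v \<bullet> (T *v (T *v v))" by (simp add: sym_inner[OF Tsym])
        also have "\<dots> = 0" using TT \<open>l v = 0\<close> by simp
        finally have "T *v v = 0" by simp
        thus ?thesis using \<open>s = 0\<close> by (simp add: s_def)
      next
        assume "w \<bullet> w = 0"
        thus ?thesis by (simp add: w_def s_def)
      qed
    qed
    show ?thesis
    proof (subst matrix_eq, intro allI)
      fix y
      have "T *v y = (\<Sum>v\<in>B. (v \<bullet> y) *\<^sub>R (T *v v))"
        by (subst exp[of y]) (simp add: mv_sum matrix_vector_mult_scaleR)
      also have "\<dots> = f y" unfolding f_def by (intro sum.cong refl) (simp add: Tv mult.commute)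
      finally show "T *v y = R *v y" by (simp add: Rf)
    qed
  qed
  show ?thesis using Rpsd RR uniq by blast
qed

lemma matrix_sqrt_props:
  fixes S :: "real^'d^'d"
  assumes "transpose S = S" and "\<forall>x. 0 \<le> x \<bullet> (S *v x)"
  shows "psd_mat (matrix_sqrt S) \<and> matrix_sqrt S ** matrix_sqrt S = S"
  unfolding matrix_sqrt_def by (rule theI'[OF psd_sqrt_unique_exists[OF assms]])



lemma psd_of_Om:
  fixes S :: "real^'d^'d"
  assumes "invertible S" "pd_mat (matrix_inv S)"
  shows "0 \<le> x \<bullet> (S *v x)"
proof -
  define Om where "Om = matrix_inv S"
  have "S ** matrix_inv S = mat 1 \<and> matrix_inv S ** S = mat 1"
    unfolding matrix_inv_def by (rule someI_ex) (use assms(1) in \<open>simp add: invertible_def\<close>)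
  hence OS: "Om ** S = mat 1" by (simp add: Om_def)
  have Osym: "transpose Om = Om" using assms(2) by (simp add: pd_mat_def Om_def)
  have "x = Om *v (S *v x)" by (simp add: matrix_vector_mul_assoc OS)
  hence "x \<bullet> (S *v x) = (Om *v (S *v x)) \<bullet> (S *v x)" by simp
  also have "\<dots> = (S *v x) \<bullet> (Om *v (S *v x))" by (rule inner_commute)
  also have "\<dots> \<ge> 0"
  proof (cases "S *v x = 0")
    case True then show ?thesis by simp
  next
    case False then show ?thesis using assms(2) by (auto simp: pd_mat_def Om_def intro: less_imp_le)
  qed
  finally show ?thesis .
qed

lemma sqrt_facts:
  fixes S :: "real^'d^'d"
  assumes "transpose S = S" "\<forall>x. 0 \<le> x \<bullet> (S *v x)"
  shows "transpose (matrix_sqrt S) = matrix_sqrt S"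
    and "(norm (matrix_sqrt S *v x))^2 = x \<bullet> (S *v x)"
proof -
  have P: "psd_mat (matrix_sqrt S)" and Q: "matrix_sqrt S ** matrix_sqrt S = S"
    using matrix_sqrt_props[OF assms] by auto
  show Rs: "transpose (matrix_sqrt S) = matrix_sqrt S" using P by (simp add: psd_mat_def)
  have "(norm (matrix_sqrt S *v x))^2 = (matrix_sqrt S *v x) \<bullet> (matrix_sqrt S *v x)"
    by (simp add: power2_norm_eq_inner)
  also have "\<dots> = x \<bullet> (matrix_sqrt S *v (matrix_sqrt S *v x))" by (rule sym_inner[OF Rs])
  also have "\<dots> = x \<bullet> (S *v x)" by (simp add: matrix_vector_mul_assoc Q)
  finally show "(norm (matrix_sqrt S *v x))^2 = x \<bullet> (S *v x)" .
qed

lemma opnorm_mv: "norm ((A::real^'n^'m) *v x) \<le> opnorm A * norm x"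
  unfolding opnorm_def by (rule onorm[OF matrix_vector_mul_bounded_linear])

lemma opnorm_nonneg: "0 \<le> opnorm (A::real^'n^'m)"
  unfolding opnorm_def by (rule onorm_pos_le[OF matrix_vector_mul_bounded_linear])

lemma transpose_row_bound:
  fixes M :: "real^'n^'m"
  assumes K: "\<And>x. norm (M *v x) \<le> K * norm x" and a: "norm a = 1" and K0: "K \<ge> 0"
  shows "norm (transpose M *v a) \<le> K"
proof -
  define b where "b = transpose M *v a"
  have "(norm b)^2 = b \<bullet> b" by (simp add: power2_norm_eq_inner)
  also have "b = a v* M" unfolding b_def
    by (metis transpose_transpose vector_transpose_matrix)
  hence "b \<bullet> b = a \<bullet> (M *v b)" by (simp add: dot_lmul_matrix)
  also have "\<dots> \<le> norm a * norm (M *v b)" by (rule norm_cauchy_schwarz)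
  also have "\<dots> \<le> K * norm b" using K[of b] a by simp
  finally have "(norm b)^2 \<le> K * norm b" .
  hence "norm b \<le> K" using K0
    by (cases "norm b = 0") (auto simp: power2_eq_square)
  thus ?thesis by (simp add: b_def)
qed

lemma comp_inner:
  fixes A :: "real^'n^'m"
  shows "(A *v x) $ i = (transpose A *v axis i 1) \<bullet> x"
proof -
  have "(A *v x) $ i = (A *v x) \<bullet> axis i 1" by (simp add: inner_axis)
  also have "\<dots> = (x v* transpose A) \<bullet> axis i 1" by simp
  also have "\<dots> = x \<bullet> (transpose A *v axis i 1)" by (rule dot_lmul_matrix)
  finally show ?thesis by (simp add: inner_commute)
qed

lemma exp_pow_pointwise:
  fixes C p a :: real
  assumes C: "C > 0" and p: "0 \<le> p" "p \<le> 1"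
  shows "exp (p * a) \<le> p * C powr (p - 1) * exp a + (1 - p) * C powr p"
proof -
  have "exp ((1 - p) *\<^sub>R ln C + p *\<^sub>R a) \<le> (1 - p) * exp (ln C) + p * exp a"
    using p by (intro convex_onD[OF exp_convex]) auto
  hence 1: "exp ((1 - p) * ln C + p * a) \<le> (1 - p) * C + p * exp a" using C by simp
  have 2: "exp ((1 - p) * ln C + p * a) = C powr (1 - p) * exp (p * a)"
    using C by (simp add: powr_def exp_add mult.commute)
  have Cp: "C powr (1 - p) > 0" using C by simp
  have "exp (p * a) = (C powr (1 - p) * exp (p * a)) / C powr (1 - p)" using Cp by simp
  also have "\<dots> \<le> ((1 - p) * C + p * exp a) / C powr (1 - p)"
    using 1 2 Cp by (intro divide_right_mono) auto
  also have "\<dots> = (1 - p) * (C / C powr (1 - p)) + p * (1 / C powr (1 - p)) * exp a"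
    by (simp add: add_divide_distrib)
  also have "C / C powr (1 - p) = C powr p"
  proof -
    have "C powr p = C powr (1 - (1 - p))" by simp
    also have "\<dots> = C powr 1 / C powr (1 - p)" by (rule powr_diff)
    finally show ?thesis using C by simp
  qed
  also have "1 / C powr (1 - p) = C powr (p - 1)"
    using C by (simp add: powr_minus_divide[symmetric])
  finally show ?thesis by (simp add: algebra_simps)
qed

lemma (in prob_space) exp_pow_bound:
  fixes f :: "'a \<Rightarrow> real"
  assumes f: "f \<in> borel_measurable M" and C: "C > 0" and p: "0 \<le> p" "p \<le> 1"
    and B: "(\<integral>\<^sup>+\<omega>. ennreal (exp (f \<omega>)) \<partial>M) \<le> ennreal C"
  shows "(\<integral>\<^sup>+\<omega>. ennreal (exp (p * f \<omega>)) \<partial>M) \<le> ennreal (C powr p)"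
proof -
  define c1 where "c1 = p * C powr (p - 1)"
  define c2 where "c2 = (1 - p) * C powr p"
  have c1: "c1 \<ge> 0" and c2: "c2 \<ge> 0" using p C by (auto simp: c1_def c2_def)
  have "(\<integral>\<^sup>+\<omega>. ennreal (exp (p * f \<omega>)) \<partial>M) \<le> (\<integral>\<^sup>+\<omega>. (ennreal c1 * ennreal (exp (f \<omega>)) + ennreal c2) \<partial>M)"
  proof (rule nn_integral_mono)
    fix \<omega>
    have "exp (p * f \<omega>) \<le> c1 * exp (f \<omega>) + c2"
      unfolding c1_def c2_def by (rule exp_pow_pointwise[OF C p])
    hence "ennreal (exp (p * f \<omega>)) \<le> ennreal (c1 * exp (f \<omega>) + c2)" by (rule ennreal_leI)
    also have "\<dots> = ennreal c1 * ennreal (exp (f \<omega>)) + ennreal c2"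
      using c1 c2 by (simp add: ennreal_plus ennreal_mult)
    finally show "ennreal (exp (p * f \<omega>)) \<le> ennreal c1 * ennreal (exp (f \<omega>)) + ennreal c2" .
  qed
  also have "\<dots> = ennreal c1 * (\<integral>\<^sup>+\<omega>. ennreal (exp (f \<omega>)) \<partial>M) + ennreal c2"
    using f by (simp add: nn_integral_add nn_integral_cmult emeasure_space_1)
  also have "\<dots> \<le> ennreal c1 * ennreal C + ennreal c2"
    by (intro add_mono mult_left_mono B) auto
  also have "\<dots> = ennreal (c1 * C + c2)" using c1 c2 C by (simp add: ennreal_plus ennreal_mult)
  also have "c1 * C + c2 = C powr p"
  proof -
    have "C powr (p - 1) * C = C powr (p - 1) * C powr 1" using C by simp
    also have "\<dots> = C powr (p - 1 + 1)" by (rule powr_add[symmetric])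
    finally have "C powr (p - 1) * C = C powr p" by simp
    thus ?thesis unfolding c1_def c2_def by (simp add: algebra_simps)
  qed
  finally show ?thesis .
qed



theorem lemmaB1:
  fixes M :: "'a measure"
    and n :: nat
    and A Sig :: "real \<Rightarrow> real^'d^'d"
    and eps e X :: "int \<Rightarrow> 'a \<Rightarrow> real^'d"
    and Phi :: "int \<Rightarrow> nat \<Rightarrow> real^'d^'d"
    and iota1 C0 C1 rho :: real
  assumes P: "prob_space M"
    and n: "n \<ge> 1"
    (* Assumption 1 (i) *)
    and A_stab: "\<forall>\<tau>\<in>{0..1}. \<forall>z::complex. norm z \<le> 1 \<longrightarrow>
                   det (mat 1 - (\<chi> i j. complex_of_real (A \<tau> $ i $ j) * z)) \<noteq> 0"
    and A_C2: "\<forall>i j. C2_on01 (\<lambda>\<tau>. A \<tau> $ i $ j)"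
    (* Assumption 1 (ii) *)
    and Sig_sym: "\<forall>\<tau>\<in>{0..1}. transpose (Sig \<tau>) = Sig \<tau>"
    and Om_pd: "\<forall>\<tau>\<in>{0..1}. invertible (Sig \<tau>) \<and> pd_mat (matrix_inv (Sig \<tau>))"
    and Sig_bdd: "bdd_above ((\<lambda>\<tau>. opnorm (Sig \<tau>)) ` {0..1})"
    and Sig_C2: "\<forall>i j. C2_on01 (\<lambda>\<tau>. Sig \<tau> $ i $ j)"
    and Om_C2: "\<forall>i j. C2_on01 (\<lambda>\<tau>. matrix_inv (Sig \<tau>) $ i $ j)"
    (* innovations eps_t: i.i.d., mean zero, identity covariance *)
    and eps_rv: "\<forall>t. eps t \<in> borel_measurable M"
    and eps_indep: "prob_space.indep_vars M (\<lambda>_. borel) eps UNIV"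
    and eps_ident: "\<forall>t. distr M borel (eps t) = distr M borel (eps 0)"
    and eps_mean: "\<forall>t i. integrable M (\<lambda>\<omega>. eps t \<omega> $ i) \<and> (\<integral>\<omega>. eps t \<omega> $ i \<partial>M) = 0"
    and eps_cov: "\<forall>t i j. integrable M (\<lambda>\<omega>. eps t \<omega> $ i * eps t \<omega> $ j) \<and>
                   (\<integral>\<omega>. eps t \<omega> $ i * eps t \<omega> $ j \<partial>M) = (if i = j then 1 else 0)"
    (* Assumption 1 (iii) *)
    and iota1: "iota1 > 0" and C0: "C0 > 0"
    and subG: "\<forall>t u. norm u = 1 \<longrightarrow>
                 (\<integral>\<^sup>+\<omega>. ennreal (exp (iota1 * (u \<bullet> eps t \<omega>)\<^sup>2)) \<partial>M) \<le> ennreal C0"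
    (* model *)
    and e_def: "\<forall>t \<omega>. e t \<omega> = matrix_sqrt (Sig (tau n t)) *v eps t \<omega>"
    and X_rec: "\<forall>t\<in>{1..int n}. \<forall>\<omega>. X t \<omega> = A (tau n t) *v X (t - 1) \<omega> + e t \<omega>"
    (* standing assumption: causal representation with geometric decay *)
    and X_MA: "\<forall>t\<in>{0..int n}. AE \<omega> in M. (\<lambda>k. Phi t k *v e (t - int k) \<omega>) sums X t \<omega>"
    and C1: "C1 > 0" and rho: "0 < rho" "rho < 1"
    and Phi_bd: "\<forall>t\<in>{0..int n}. \<forall>k. opnorm (Phi t k) \<le> C1 * rho ^ k"
  shows "let Cstar = Max ((\<lambda>t. opnorm (Sig (tau n t))) ` {1..int n});
             iota2 = iota1 / Cstar;
             iota3 = iota1 * (1 - rho) / (C1\<^sup>2 * Cstar)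
         in (\<forall>u. norm u = 1 \<longrightarrow> (\<forall>t\<in>{1..int n}.
                (\<integral>\<^sup>+\<omega>. ennreal (exp (iota2 * (u \<bullet> e t \<omega>)\<^sup>2)) \<partial>M) \<le> ennreal C0))
          \<and> (\<forall>t\<in>{1..int n}. \<forall>i.
                (\<integral>\<^sup>+\<omega>. ennreal (exp (iota3 * (X t \<omega> $ i)\<^sup>2)) \<partial>M)
                   \<le> ennreal (C0 powr (1 / (1 - rho))))"
proof -
  interpret prob_space M by (rule P)
  note [measurable] = eps_rv[rule_format]
  define Cs where "Cs = Max ((\<lambda>t. opnorm (Sig (tau n t))) ` {1..int n})"
  have tau_max: "tau n s = tau n (max s 1)" for s by (simp add: tau_def)
  have Cs_ge: "opnorm (Sig (tau n s)) \<le> Cs" if "s \<le> int n" for s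
  proof -
    have "max s 1 \<in> {1..int n}" using that n by auto
    hence "opnorm (Sig (tau n (max s 1))) \<le> Cs" unfolding Cs_def by (intro Max_ge) auto
    thus ?thesis by (subst tau_max)
  qed
  have tau01: "tau n s \<in> {0..1}" if "s \<le> int n" for s
    using that n by (auto simp: tau_def divide_le_eq)
  have Cs0: "Cs \<ge> 0" using Cs_ge[of 1] n opnorm_nonneg[of "Sig (tau n 1)"] by simp
  have Ssym: "transpose (Sig (tau n s)) = Sig (tau n s)" if "s \<le> int n" for s
    using Sig_sym tau01[OF that] by blast
  have Spsd: "\<forall>x. 0 \<le> x \<bullet> (Sig (tau n s) *v x)" if "s \<le> int n" for s
    using Om_pd tau01[OF that] psd_of_Om by blast
  define Rm where "Rm s = matrix_sqrt (Sig (tau n s))" for s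
  have Rsym: "transpose (Rm s) = Rm s" if "s \<le> int n" for s
    unfolding Rm_def by (rule sqrt_facts(1)[OF Ssym[OF that] Spsd[OF that]])
  have Rnorm2: "(norm (Rm s *v x))^2 \<le> Cs * (norm x)^2" if "s \<le> int n" for s x
  proof -
    have "(norm (Rm s *v x))^2 = x \<bullet> (Sig (tau n s) *v x)"
      unfolding Rm_def by (rule sqrt_facts(2)[OF Ssym[OF that] Spsd[OF that]])
    also have "\<dots> \<le> norm x * norm (Sig (tau n s) *v x)" by (rule norm_cauchy_schwarz)
    also have "\<dots> \<le> norm x * (opnorm (Sig (tau n s)) * norm x)"
      by (intro mult_left_mono opnorm_mv) auto
    also have "\<dots> \<le> norm x * (Cs * norm x)"
      by (intro mult_left_mono mult_right_mono Cs_ge that) auto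
    finally show ?thesis by (simp add: power2_eq_square mult_ac)
  qed
  have Rnorm: "norm (Rm s *v x) \<le> sqrt Cs * norm x" if "s \<le> int n" for s x
  proof (rule power2_le_imp_le)
    show "(norm (Rm s *v x))^2 \<le> (sqrt Cs * norm x)^2"
      using Rnorm2[OF that, of x] Cs0 by (simp add: power_mult_distrib)
  qed (use Cs0 in simp)
  have eR: "e s \<omega> = Rm s *v eps s \<omega>" for s \<omega> by (simp add: e_def Rm_def)
  have C0ge1: "1 \<le> C0"
  proof -
    obtain j :: 'd where True by blast
    have "ennreal 1 = (\<integral>\<^sup>+\<omega>. ennreal 1 \<partial>M)" by (simp add: emeasure_space_1)
    also have "\<dots> \<le> (\<integral>\<^sup>+\<omega>. ennreal (exp (iota1 * (axis j 1 \<bullet> eps 0 \<omega>)\<^sup>2)) \<partial>M)"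
      using iota1 by (intro nn_integral_mono ennreal_leI) auto
    also have "\<dots> \<le> ennreal C0" using subG by simp
    finally show ?thesis using C0 by (simp add: ennreal_le_iff)
  qed
  have part1: "(\<integral>\<^sup>+\<omega>. ennreal (exp (iota1 / Cs * (u \<bullet> e t \<omega>)\<^sup>2)) \<partial>M) \<le> ennreal C0"
    if u: "norm u = 1" and t: "t \<in> {1..int n}" for u t
  proof -
    have tn: "t \<le> int n" using t by auto
    define r where "r = Rm t *v u"
    have ue: "u \<bullet> e t \<omega> = r \<bullet> eps t \<omega>" for \<omega>
      unfolding eR r_def by (rule sym_inner[OF Rsym[OF tn], symmetric])
    have r2: "(norm r)^2 \<le> Cs" using Rnorm2[OF tn, of u] u by (simp add: r_def)
    show ?thesis
    proof (cases "r = 0")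
      case True
      have "(\<integral>\<^sup>+\<omega>. ennreal (exp (iota1 / Cs * (u \<bullet> e t \<omega>)\<^sup>2)) \<partial>M) = (\<integral>\<^sup>+\<omega>. ennreal 1 \<partial>M)"
        by (simp add: ue True)
      also have "\<dots> = ennreal 1" by (simp add: emeasure_space_1)
      also have "\<dots> \<le> ennreal C0" using C0ge1 by (rule ennreal_leI)
      finally show ?thesis .
    next
      case False
      have nr: "norm r > 0" using False by simp
      have Csp: "Cs > 0" using r2 nr by (smt (verit) zero_less_power)
      define v where "v = r /\<^sub>R norm r"
      have nv: "norm v = 1" using False by (simp add: v_def)
      have rv: "r \<bullet> y = norm r * (v \<bullet> y)" for y using nr by (simp add: v_def)
      have "(\<integral>\<^sup>+\<omega>. ennreal (exp (iota1 / Cs * (u \<bullet> e t \<omega>)\<^sup>2)) \<partial>M)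
            \<le> (\<integral>\<^sup>+\<omega>. ennreal (exp (iota1 * (v \<bullet> eps t \<omega>)\<^sup>2)) \<partial>M)"
      proof (intro nn_integral_mono ennreal_leI)
        fix \<omega>
        have "iota1 / Cs * (u \<bullet> e t \<omega>)\<^sup>2 = iota1 * ((norm r)^2 / Cs) * (v \<bullet> eps t \<omega>)\<^sup>2"
          by (simp add: ue rv power_mult_distrib)
        also have "\<dots> \<le> iota1 * 1 * (v \<bullet> eps t \<omega>)\<^sup>2"
          using r2 Csp iota1 by (intro mult_right_mono mult_left_mono) auto
        finally show "exp (iota1 / Cs * (u \<bullet> e t \<omega>)\<^sup>2) \<le> exp (iota1 * (v \<bullet> eps t \<omega>)\<^sup>2)" by simp
      qed
      also have "\<dots> \<le> ennreal C0" using subG nv by blast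
      finally show ?thesis .
    qed
  qed
  have part2: "(\<integral>\<^sup>+\<omega>. ennreal (exp (iota1 * (1 - rho) / (C1\<^sup>2 * Cs) * (X t \<omega> $ i)\<^sup>2)) \<partial>M)
                   \<le> ennreal (C0 powr (1 / (1 - rho)))"
    if t: "t \<in> {1..int n}" for t i
  proof -
    have tn: "t \<le> int n" and t0: "t \<in> {0..int n}" using t by auto
    define iota3 where "iota3 = iota1 * (1 - rho) / (C1\<^sup>2 * Cs)"
    have iota3_0: "iota3 \<ge> 0" unfolding iota3_def using iota1 rho Cs0 by simp
    have iota3_le: "iota3 * (C1\<^sup>2 * Cs / (1 - rho)) \<le> iota1"
    proof (cases "Cs = 0")
      case True then show ?thesis using iota1 by (simp add: iota3_def)
    next
      case False then show ?thesis using rho C1 iota1 by (simp add: iota3_def)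
    qed
    define b where "b k = transpose (Phi t k ** Rm (t - int k)) *v axis i 1" for k
    have bnorm: "norm (b k) \<le> C1 * rho ^ k * sqrt Cs" for k
      unfolding b_def
    proof (rule transpose_row_bound)
      fix x
      have "norm ((Phi t k ** Rm (t - int k)) *v x) = norm (Phi t k *v (Rm (t - int k) *v x))"
        by (simp add: matrix_vector_mul_assoc)
      also have "\<dots> \<le> opnorm (Phi t k) * norm (Rm (t - int k) *v x)" by (rule opnorm_mv)
      also have "\<dots> \<le> (C1 * rho ^ k) * (sqrt Cs * norm x)"
        using Phi_bd t0 Rnorm[of "t - int k" x] tn opnorm_nonneg[of "Phi t k"] C1 rho
        by (intro mult_mono) auto
      finally show "norm ((Phi t k ** Rm (t - int k)) *v x) \<le> C1 * rho ^ k * sqrt Cs * norm x"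
        by (simp add: mult_ac)
    qed (use C1 rho Cs0 in auto)
    define vv where "vv k = (if b k = 0 then axis i 1 else b k /\<^sub>R norm (b k))" for k
    have nvv: "norm (vv k) = 1" for k by (simp add: vv_def)
    have bsq: "(b k \<bullet> y)^2 \<le> (norm (b k))^2 * (vv k \<bullet> y)^2" for k y
    proof (cases "b k = 0")
      case True then show ?thesis by simp
    next
      case False
      hence "b k \<bullet> y = norm (b k) * (vv k \<bullet> y)" by (simp add: vv_def)
      thus ?thesis by (simp add: power_mult_distrib)
    qed
    define Z where "Z k \<omega> = vv k \<bullet> eps (t - int k) \<omega>" for k \<omega>
    define xs where "xs N \<omega> = (\<Sum>k<N. b k \<bullet> eps (t - int k) \<omega>)" for N \<omega>
    have xs_eq: "xs N \<omega> = (\<Sum>k<N. Phi t k *v e (t - int k) \<omega>) $ i" for N \<omega>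
      unfolding xs_def b_def sum_component eR
      by (simp add: matrix_vector_mul_assoc comp_inner)
    have xs_bd: "iota3 * (xs N \<omega>)^2 \<le> iota1 * (\<Sum>k<N. rho ^ k * (Z k \<omega>)^2)" for N \<omega>
    proof -
      define y where "y k = b k \<bullet> eps (t - int k) \<omega>" for k
      define Q where "Q = (\<Sum>k<N. rho ^ k * (Z k \<omega>)^2)"
      have rk: "rho ^ k > 0" for k using rho by simp
      have Q0: "Q \<ge> 0" unfolding Q_def using rho by (intro sum_nonneg) auto
      have "(xs N \<omega>)^2 = (\<Sum>k<N. sqrt (rho ^ k) * (y k / sqrt (rho ^ k)))^2"
        unfolding xs_def y_def using rk rho by (simp add: less_imp_le)
      also have "\<dots> \<le> (\<Sum>k<N. (sqrt (rho ^ k))^2) * (\<Sum>k<N. (y k / sqrt (rho ^ k))^2)"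
        by (rule Cauchy_Schwarz_ineq_sum)
      also have "\<dots> = (\<Sum>k<N. rho ^ k) * (\<Sum>k<N. (y k)^2 / rho ^ k)"
        using rk by (simp add: less_imp_le power_divide)
      also have "\<dots> \<le> (1 / (1 - rho)) * (C1\<^sup>2 * Cs * Q)"
      proof (rule mult_mono)
        have "(\<Sum>k<N. rho ^ k) = (1 - rho ^ N) / (1 - rho)"
          using rho by (simp add: sum_gp_strict)
        also have "\<dots> \<le> 1 / (1 - rho)" using rho by (intro divide_right_mono) auto
        finally show "(\<Sum>k<N. rho ^ k) \<le> 1 / (1 - rho)" .
        show "(\<Sum>k<N. (y k)^2 / rho ^ k) \<le> C1\<^sup>2 * Cs * Q"
          unfolding Q_def sum_distrib_left
        proof (rule sum_mono)
          fix k assume "k \<in> {..<N}"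
          have "(y k)^2 \<le> (norm (b k))^2 * (Z k \<omega>)^2" unfolding y_def Z_def by (rule bsq)
          also have "\<dots> \<le> (C1 * rho ^ k * sqrt Cs)^2 * (Z k \<omega>)^2"
            by (intro mult_right_mono power_mono bnorm) auto
          also have "\<dots> = rho ^ k * (C1\<^sup>2 * Cs * (rho ^ k * (Z k \<omega>)^2))"
            using Cs0 by (simp add: power_mult_distrib power2_eq_square)
          finally show "(y k)^2 / rho ^ k \<le> C1\<^sup>2 * Cs * (rho ^ k * (Z k \<omega>)^2)"
            using rk[of k] by (simp add: divide_le_eq mult.commute)
        qed
      qed (use rho in \<open>auto intro!: sum_nonneg\<close>)
      finally have "(xs N \<omega>)^2 \<le> (C1\<^sup>2 * Cs / (1 - rho)) * Q" by simp
      hence "iota3 * (xs N \<omega>)^2 \<le> iota3 * ((C1\<^sup>2 * Cs / (1 - rho)) * Q)"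
        using iota3_0 by (rule mult_left_mono)
      also have "\<dots> = (iota3 * (C1\<^sup>2 * Cs / (1 - rho))) * Q" by simp
      also have "\<dots> \<le> iota1 * Q" using iota3_le Q0 by (rule mult_right_mono)
      finally show ?thesis unfolding Q_def .
    qed
    have bound_N: "(\<integral>\<^sup>+\<omega>. ennreal (exp (iota3 * (xs N \<omega>)^2)) \<partial>M) \<le> ennreal (C0 powr (1 / (1 - rho)))" for N
    proof -
      define h where "h k x = ennreal (exp (rho ^ k * (iota1 * (vv k \<bullet> x)^2)))" for k x
      define J where "J = (\<lambda>k. t - int k) ` {..<N}"
      have inj: "inj_on (\<lambda>k. t - int k) {..<N}" by (auto simp: inj_on_def)
      define Y where "Y s \<omega> = h (nat (t - s)) (eps s \<omega>)" for s \<omega>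
      have Yk: "Y (t - int k) = (\<lambda>\<omega>. h k (eps (t - int k) \<omega>))" for k by (simp add: Y_def fun_eq_iff)
      have hmeas: "h k \<in> borel_measurable borel" for k unfolding h_def by measurable
      have ind: "indep_vars (\<lambda>_. borel) Y J"
        unfolding Y_def
        by (rule indep_vars_compose2[OF indep_vars_subset[OF eps_indep subset_UNIV]]) (rule hmeas)
      have Yprod: "(\<Prod>s\<in>J. g s) = (\<Prod>k<N. g (t - int k))" for g :: "int \<Rightarrow> ennreal"
        unfolding J_def by (simp add: prod.reindex[OF inj])
      have "(\<integral>\<^sup>+\<omega>. ennreal (exp (iota3 * (xs N \<omega>)^2)) \<partial>M)
            \<le> (\<integral>\<^sup>+\<omega>. ennreal (exp (\<Sum>k<N. rho ^ k * (iota1 * (Z k \<omega>)^2))) \<partial>M)"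
      proof (intro nn_integral_mono ennreal_leI)
        fix \<omega>
        have "iota3 * (xs N \<omega>)^2 \<le> (\<Sum>k<N. rho ^ k * (iota1 * (Z k \<omega>)^2))"
          using xs_bd[of N \<omega>] by (simp add: sum_distrib_left mult_ac)
        thus "exp (iota3 * (xs N \<omega>)^2) \<le> exp (\<Sum>k<N. rho ^ k * (iota1 * (Z k \<omega>)^2))" by simp
      qed
      also have "\<dots> = (\<integral>\<^sup>+\<omega>. (\<Prod>k<N. h k (eps (t - int k) \<omega>)) \<partial>M)"
        by (simp add: exp_sum prod_ennreal h_def Z_def)
      also have "\<dots> = (\<integral>\<^sup>+\<omega>. (\<Prod>s\<in>J. Y s \<omega>) \<partial>M)"
        by (simp add: Yprod Yk)
      also have "\<dots> = (\<Prod>s\<in>J. \<integral>\<^sup>+\<omega>. Y s \<omega> \<partial>M)"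
        by (rule indep_vars_nn_integral[OF _ ind]) (auto simp: J_def)
      also have "\<dots> = (\<Prod>k<N. \<integral>\<^sup>+\<omega>. h k (eps (t - int k) \<omega>) \<partial>M)"
        by (simp add: Yprod Yk)
      also have "\<dots> \<le> (\<Prod>k<N. ennreal (C0 powr (rho ^ k)))"
      proof (rule prod_mono_ennreal)
        fix k
        have "(\<integral>\<^sup>+\<omega>. ennreal (exp (rho ^ k * (iota1 * (vv k \<bullet> eps (t - int k) \<omega>)^2))) \<partial>M)
              \<le> ennreal (C0 powr (rho ^ k))"
        proof (rule exp_pow_bound)
          show "(\<lambda>\<omega>. iota1 * (vv k \<bullet> eps (t - int k) \<omega>)^2) \<in> borel_measurable M" by measurable
          show "(\<integral>\<^sup>+\<omega>. ennreal (exp (iota1 * (vv k \<bullet> eps (t - int k) \<omega>)^2)) \<partial>M) \<le> ennreal C0"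
            using subG nvv by blast
        qed (use C0 rho in \<open>auto simp: power_le_one\<close>)
        thus "(\<integral>\<^sup>+\<omega>. h k (eps (t - int k) \<omega>) \<partial>M) \<le> ennreal (C0 powr (rho ^ k))"
          by (simp add: h_def)
      qed
      also have "\<dots> = ennreal (C0 powr (\<Sum>k<N. rho ^ k))"
        using C0 by (simp add: prod_ennreal powr_sum)
      also have "\<dots> \<le> ennreal (C0 powr (1 / (1 - rho)))"
      proof (intro ennreal_leI powr_mono C0ge1)
        have "(\<Sum>k<N. rho ^ k) = (1 - rho ^ N) / (1 - rho)"
          using rho by (simp add: sum_gp_strict)
        also have "\<dots> \<le> 1 / (1 - rho)" using rho by (intro divide_right_mono) auto
        finally show "(\<Sum>k<N. rho ^ k) \<le> 1 / (1 - rho)" .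
      qed
      finally show ?thesis .
    qed
    have meas_xs: "(\<lambda>\<omega>. ennreal (exp (iota3 * (xs N \<omega>)^2))) \<in> borel_measurable M" for N
      unfolding xs_def by measurable
    have AEconv: "AE \<omega> in M. (\<lambda>N. ennreal (exp (iota3 * (xs N \<omega>)^2))) \<longlonglongrightarrow> ennreal (exp (iota3 * (X t \<omega> $ i)^2))"
      using X_MA t0
    proof -
      have "AE \<omega> in M. (\<lambda>k. Phi t k *v e (t - int k) \<omega>) sums X t \<omega>" using X_MA t0 by blast
      thus ?thesis
      proof (rule AE_mp, intro AE_I2 impI)
        fix \<omega> assume "(\<lambda>k. Phi t k *v e (t - int k) \<omega>) sums X t \<omega>"
        hence "(\<lambda>N. (\<Sum>k<N. Phi t k *v e (t - int k) \<omega>)) \<longlonglongrightarrow> X t \<omega>" by (simp add: sums_def)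
        hence "(\<lambda>N. xs N \<omega>) \<longlonglongrightarrow> X t \<omega> $ i" unfolding xs_eq by (rule tendsto_vec_nth)
        thus "(\<lambda>N. ennreal (exp (iota3 * (xs N \<omega>)^2))) \<longlonglongrightarrow> ennreal (exp (iota3 * (X t \<omega> $ i)^2))"
          by (intro tendsto_ennrealI tendsto_intros)
      qed
    qed
    have "(\<integral>\<^sup>+\<omega>. ennreal (exp (iota3 * (X t \<omega> $ i)^2)) \<partial>M)
          = (\<integral>\<^sup>+\<omega>. liminf (\<lambda>N. ennreal (exp (iota3 * (xs N \<omega>)^2))) \<partial>M)"
    proof (rule nn_integral_cong_AE)
      show "AE \<omega> in M. ennreal (exp (iota3 * (X t \<omega> $ i)^2)) = liminf (\<lambda>N. ennreal (exp (iota3 * (xs N \<omega>)^2)))"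
        using AEconv
      proof (rule AE_mp, intro AE_I2 impI)
        fix \<omega> assume L: "(\<lambda>N. ennreal (exp (iota3 * (xs N \<omega>)^2))) \<longlonglongrightarrow> ennreal (exp (iota3 * (X t \<omega> $ i)^2))"
        show "ennreal (exp (iota3 * (X t \<omega> $ i)^2)) = liminf (\<lambda>N. ennreal (exp (iota3 * (xs N \<omega>)^2)))"
          using lim_imp_Liminf[of sequentially, OF _ L] by simp
      qed
    qed
    also have "\<dots> \<le> liminf (\<lambda>N. \<integral>\<^sup>+\<omega>. ennreal (exp (iota3 * (xs N \<omega>)^2)) \<partial>M)"
      by (rule nn_integral_liminf[OF meas_xs])
    also have "\<dots> \<le> ennreal (C0 powr (1 / (1 - rho)))"
      by (intro Liminf_le always_eventually allI bound_N) simp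
    finally show ?thesis unfolding iota3_def .
  qed
  show ?thesis unfolding Let_def Cs_def[symmetric] using part1 part2 by blast
qed

end
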